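(* For every integer $n\ge1$ the following hold in the $q$-shuffle algebra $\mathbb V$ (polynomials are evaluated using $\star$; the elements $\tilde G_i$ mutually commute, as do the $C_i$). (i) $C_n$ is a homogeneous polynomial in $\tilde G_1,\ldots,\tilde G_n$ of total degree $n$, where each $\tilde G_i$ is given degree $i$. In this polynomial the coefficient of $\tilde G_n$ is $(-1)^{n+1}(q^n+q^{-n})$. (ii) $\tilde G_n$ is a homogeneous polynomial in $C_1,\ldots,C_n$ of total degree $n$, where each $C_i$ is given degree $i$. In this polynomial the coefficient of $C_n$ is $(-1)^{n+1}(q^n+q^{-n})^{-1}$.
   Context: Let $\mathbb F$ be a field and let $q\in\mathbb F$ be nonzero and not a root of unity. Let $[m]_q=(q^m-q^{-m})/(q-q^{-1})$. Let $\mathbb V$ be the free associative $\mathbb F$-algebra on noncommuting $x,y$, with basis the words (including $1$). Juxtaposition denotes concatenation. Set $\langle x,x\rangle=\langle y,y\rangle=2$ and $\langle x,y\rangle=\langle y,x\rangle=-2$. The $q$-shuffle product $\star$ is the bilinear product determined as follows: - $1\star v=v\star 1=v$; - for nontrivial words $u=u_1\cdots u_r$ and $v=v_1\cdots v_s$, $$u\star v=u_1((u_2\cdots u_r)\star v)+v_1(u\star(v_2\cdots v_s))q^{\langle u_1,v_1\rangle+\cdots+\langle u_r,v_1\rangle}.$$ This makes $\mathbb V$ an associative algebra, the $q$-shuffle algebra. For $k\in\mathbb N$, let $\tilde G_k=xyxy\cdots xy$ be the word of length $2k$, with $\tilde G_0=1$. Let $\overline x=1$ and $\overline y=-1$. A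 word $v_1\cdots v_m$ is Catalan if $\overline v_1+\cdots+\overline v_i\ge0$ for $1\le i\le m-1$ and $\overline v_1+\cdots+\overline v_m=0$. For $n\in\mathbb N$, $$C_n=\sum v_1\cdots v_{2n}\,[1]_q[1+\overline v_1]_q\cdots[1+\overline v_1+\cdots+\overline v_{2n}]_q,$$ where the sum is over Catalan words of length $2n$. *)

theory Defs
  imports Main "HOL-Library.Multiset"
begin

text \<open>An element of the free algebra V
  is represented by its coefficient function on words (elements of V are the
  finitely supported ones; all elements considered here are finitely supported).\<close>

datatype letter = X | Y

type_synonym 'a vec = "letter list \<Rightarrow> 'a"

fun bil :: "letter \<Rightarrow> letter \<Rightarrow> int" where
  "bil X X = 2" | "bil Y Y = 2" | "bil X Y = -2" | "bil Y X = -2"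

definition basis :: "letter list \<Rightarrow> 'a::field vec" where
  "basis u = (\<lambda>w. if w = u then 1 else 0)"

definition prepend :: "letter \<Rightarrow> 'a::field vec \<Rightarrow> 'a vec" where
  "prepend a f = (\<lambda>w. case w of [] \<Rightarrow> 0 | b # w' \<Rightarrow> if b = a then f w' else 0)"

fun wstar :: "'a::field \<Rightarrow> letter list \<Rightarrow> letter list \<Rightarrow> 'a vec" where
  "wstar q [] v = basis v"
| "wstar q (a # u) [] = basis (a # u)"
| "wstar q (a # u) (b # v) =
     (\<lambda>w. prepend a (wstar q u (b # v)) w
        + q powi (sum_list (map (\<lambda>c. bil c b) (a # u))) * prepend b (wstar q (a # u) v) w)"

definition supp :: "'a::zero vec \<Rightarrow> letter list set" where
  "supp f = {w. f w \<noteq> 0}"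

definition qstar :: "'a::field \<Rightarrow> 'a vec \<Rightarrow> 'a vec \<Rightarrow> 'a vec" where
  "qstar q f g = (\<lambda>w. \<Sum>u\<in>supp f. \<Sum>v\<in>supp g. f u * g v * wstar q u v w)"

definition qstar_list :: "'a::field \<Rightarrow> 'a vec list \<Rightarrow> 'a vec" where
  "qstar_list q fs = foldr (qstar q) fs (basis [])"

definition Gt :: "nat \<Rightarrow> 'a::field vec" where
  "Gt k = basis (concat (replicate k [X, Y]))"

definition qint :: "'a::field \<Rightarrow> int \<Rightarrow> 'a" where
  "qint q m = (q powi m - q powi (- m)) / (q - inverse q)"

fun bar :: "letter \<Rightarrow> int" where
  "bar X = 1" | "bar Y = -1"

definition psum :: "letter list \<Rightarrow> nat \<Rightarrow> int" where
  "psum w i = sum_list (map bar (take i w))"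

definition catalan :: "letter list \<Rightarrow> bool" where
  "catalan w \<longleftrightarrow> (\<forall>i. 1 \<le> i \<and> i \<le> length w - 1 \<longrightarrow> psum w i \<ge> 0) \<and> psum w (length w) = 0"

definition Cn :: "'a::field \<Rightarrow> nat \<Rightarrow> 'a vec" where
  "Cn q n = (\<lambda>w. if catalan w \<and> length w = 2 * n
      then qint q 1 * (\<Prod>i = 1..2 * n. qint q (1 + psum w i)) else 0)"

definition partitions :: "nat \<Rightarrow> nat multiset set" where
  "partitions n = {p. 0 \<notin># p \<and> sum_mset p = n}"

definition monomial :: "'a::field \<Rightarrow> (nat \<Rightarrow> 'a vec) \<Rightarrow> nat multiset \<Rightarrow> 'a vec" where
  "monomial q F p = qstar_list q (map F (sorted_list_of_multiset p))"

text \<open>f is a homogeneous polynomial of weighted degree n in F_1,...,F_n (F_i of degree i),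
  with coefficient function c on monomials (indexed by partitions of n).\<close>
definition hom_poly_with :: "'a::field \<Rightarrow> (nat \<Rightarrow> 'a vec) \<Rightarrow> nat \<Rightarrow> (nat multiset \<Rightarrow> 'a) \<Rightarrow> 'a vec \<Rightarrow> bool" where
  "hom_poly_with q F n c f \<longleftrightarrow>
     f = (\<lambda>w. \<Sum>p\<in>partitions n. c p * monomial q F p w)"

end

theory Submission
  imports Defs
begin

definition der :: "letter \<Rightarrow> 'a vec \<Rightarrow> 'a vec" where
  "der a f = (\<lambda>w. f (a # w))"
definition barw :: "letter list \<Rightarrow> int" where
  "barw w = sum_list (map bar w)"
definition Kop :: "'a::field \<Rightarrow> letter \<Rightarrow> 'a vec \<Rightarrow> 'a vec" where
  "Kop q a f = (\<lambda>w. q powi (2 * bar a * barw w) * f w)"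

fun st :: "'a::field \<Rightarrow> 'a vec \<Rightarrow> 'a vec \<Rightarrow> letter list \<Rightarrow> 'a" where
  "st q f g [] = f [] * g []"
| "st q f g (a # w) = st q (der a f) g w + st q (Kop q a f) (der a g) w"

declare st.simps[simp del]

lemma der_zero[simp]: "der a (\<lambda>_. 0) = (\<lambda>_. 0)" by (simp add: der_def)
lemma Kop_zero[simp]: "Kop q a (\<lambda>_. 0) = (\<lambda>_. 0)" by (simp add: Kop_def)

lemma barw_simps[simp]: "barw [] = 0" "barw (a # w) = bar a + barw w"
  by (simp_all add: barw_def)

lemma st_Nil: "st q f g [] = f [] * g []" by (simp add: st.simps)
lemma st_Cons: "st q f g (a # w) = st q (der a f) g w + st q (Kop q a f) (der a g) w"
  by (simp add: st.simps)

lemma st_zero_left[simp]: "st q (\<lambda>_. 0) g w = 0"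
  by (induction w arbitrary: g) (simp_all add: st_Nil st_Cons der_def Kop_def)

lemma st_zero_right[simp]: "st q f (\<lambda>_. 0) w = 0"
  by (induction w arbitrary: f) (simp_all add: st_Nil st_Cons der_def Kop_def)

lemma st_sum_left: "st q (\<lambda>w. \<Sum>i\<in>I. F i w) g w = (\<Sum>i\<in>I. st q (F i) g w)"
proof (induction w arbitrary: F g)
  case Nil then show ?case by (simp add: st_Nil sum_distrib_right)
next
  case (Cons a w)
  have 1: "der a (\<lambda>w. \<Sum>i\<in>I. F i w) = (\<lambda>w. \<Sum>i\<in>I. der a (F i) w)" by (simp add: der_def)
  have 2: "Kop q a (\<lambda>w. \<Sum>i\<in>I. F i w) = (\<lambda>w. \<Sum>i\<in>I. Kop q a (F i) w)" by (simp add: Kop_def sum_distrib_left)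
  show ?case by (simp add: st_Cons 1 2 Cons sum.distrib)
qed

lemma st_sum_right: "st q f (\<lambda>w. \<Sum>i\<in>I. F i w) w = (\<Sum>i\<in>I. st q f (F i) w)"
proof (induction w arbitrary: F f)
  case Nil then show ?case by (simp add: st_Nil sum_distrib_left)
next
  case (Cons a w)
  have 1: "der a (\<lambda>w. \<Sum>i\<in>I. F i w) = (\<lambda>w. \<Sum>i\<in>I. der a (F i) w)" by (simp add: der_def)
  show ?case by (simp add: st_Cons 1 Cons sum.distrib)
qed

lemma st_add_left: "st q (\<lambda>w. f1 w + f2 w) g w = st q f1 g w + st q f2 g w"
  using st_sum_left[of q "\<lambda>i. if i then f1 else f2" UNIV g w]
  by (simp add: UNIV_bool add.commute)

lemma st_add_right: "st q f (\<lambda>w. g1 w + g2 w) w = st q f g1 w + st q f g2 w"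
  using st_sum_right[of q f "\<lambda>i. if i then g1 else g2" UNIV w]
  by (simp add: UNIV_bool add.commute)

lemma st_scale_left: "st q (\<lambda>w. c * f w) g w = c * st q f g w"
proof (induction w arbitrary: f g)
  case Nil then show ?case by (simp add: st_Nil)
next
  case (Cons a w)
  have 1: "der a (\<lambda>w. c * f w) = (\<lambda>w. c * der a f w)" by (simp add: der_def)
  have 2: "Kop q a (\<lambda>w. c * f w) = (\<lambda>w. c * Kop q a f w)" by (simp add: Kop_def algebra_simps)
  show ?case by (simp add: st_Cons 1 2 Cons algebra_simps)
qed

lemma st_scale_right: "st q f (\<lambda>w. c * g w) w = c * st q f g w"
proof (induction w arbitrary: f g)
  case Nil then show ?case by (simp add: st_Nil)
next
  case (Cons a w)
  have 1: "der a (\<lambda>w. c * g w) = (\<lambda>w. c * der a g w)" by (simp add: der_def)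
  show ?case by (simp add: st_Cons 1 Cons algebra_simps)
qed

lemma st_neg_left: "st q (\<lambda>w. - f w) g w = - st q f g w"
  using st_scale_left[of q "-1" f g w] by simp
lemma st_neg_right: "st q f (\<lambda>w. - g w) w = - st q f g w"
  using st_scale_right[of q f "-1" g w] by simp

lemma st_unit_left: "st q (basis []) g w = g w"
proof (induction w arbitrary: g)
  case Nil then show ?case by (simp add: st_Nil basis_def)
next
  case (Cons a w)
  have 1: "der a (basis []) = (\<lambda>_. 0)" by (simp add: der_def basis_def)
  have 2: "Kop q a (basis []) = basis []" by (auto simp add: Kop_def basis_def)
  show ?case by (simp add: st_Cons 1 2 Cons) (simp add: der_def)
qed

lemma st_unit_right: "st q f (basis []) w = f w"
proof (induction w arbitrary: f)
  case Nil then show ?case by (simp add: st_Nil basis_def)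
next
  case (Cons a w)
  have 1: "der a (basis []) = (\<lambda>_. 0)" by (simp add: der_def basis_def)
  show ?case by (simp add: st_Cons 1 Cons) (simp add: der_def)
qed

lemma bil_eq: "bil c b = 2 * bar c * bar b"
  by (cases c; cases b) simp_all

lemma sum_bil: "sum_list (map (\<lambda>d. bil d c) u) = 2 * bar c * barw u"
  by (induction u) (simp_all add: bil_eq algebra_simps)

lemma der_basis: "der a (basis u) = (if u \<noteq> [] \<and> hd u = a then basis (tl u) else (\<lambda>_. 0))"
  by (cases u) (auto simp: der_def basis_def fun_eq_iff)

lemma Kop_basis: "Kop q a (basis u) = (\<lambda>w. q powi (2 * bar a * barw u) * basis u w)"
  by (auto simp: Kop_def basis_def fun_eq_iff)

lemma st_basis: "st q (basis u) (basis v) w = wstar q u v w"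
proof (induction w arbitrary: u v)
  case Nil
  show ?case
    by (cases u; cases v) (simp_all add: st_Nil basis_def prepend_def)
next
  case (Cons a w)
  show ?case
  proof (cases u)
    case Nil
    show ?thesis
    proof (cases v)
      case Nil
      then show ?thesis using \<open>u = []\<close> by (simp add: st_Cons der_basis Kop_basis st_unit_left) (simp add: basis_def)
    next
      case (Cons c v')
      have "st q (basis u) (basis v) (a # w) = der a (basis v) w"
        using \<open>u = []\<close> by (simp add: st_Cons der_basis Kop_basis st_unit_left)
      then show ?thesis using \<open>u = []\<close> Cons by (simp add: der_def basis_def)
    qed
  next
    case (Cons b u')
    note u = this
    show ?thesis
    proof (cases v)
      case Nil
      then show ?thesis using u
        by (simp add: st_Cons der_basis Kop_basis st_scale_left st_unit_right; simp add: basis_def)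
    next
      case (Cons c v')
      then show ?thesis using u
        by (auto simp: st_Cons der_basis Kop_basis st_scale_left Cons.IH prepend_def sum_bil
                 simp del: sum_list.Cons list.map)
    qed
  qed
qed

definition hl :: "nat \<Rightarrow> 'a::zero vec \<Rightarrow> bool" where
  "hl m f \<longleftrightarrow> (\<forall>w. f w \<noteq> 0 \<longrightarrow> length w = m)"

lemma st_zero_left': "(\<And>w. f w = 0) \<Longrightarrow> st q f g w = 0"
proof -
  assume "\<And>w. f w = 0" then have "f = (\<lambda>_. 0)" by auto
  then show ?thesis by simp
qed

lemma st_zero_right': "(\<And>w. g w = 0) \<Longrightarrow> st q f g w = 0"
proof -
  assume "\<And>w. g w = 0" then have "g = (\<lambda>_. 0)" by auto
  then show ?thesis by simp
qed

lemma st_hl: "hl a f \<Longrightarrow> hl b g \<Longrightarrow> st q f g w \<noteq> 0 \<Longrightarrow> length w = a + b"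
proof (induction w arbitrary: f g a b)
  case Nil
  then show ?case by (auto simp: st_Nil hl_def)
next
  case (Cons c w)
  have "st q (der c f) g w \<noteq> 0 \<or> st q (Kop q c f) (der c g) w \<noteq> 0"
    using Cons.prems(3) by (auto simp: st_Cons)
  then show ?case
  proof
    assume h: "st q (der c f) g w \<noteq> 0"
    then obtain w' where "der c f w' \<noteq> 0" using st_zero_left' by blast
    then have a1: "a \<ge> 1" using Cons.prems(1) by (auto simp: hl_def der_def)
    have "hl (a - 1) (der c f)" using Cons.prems(1) by (auto simp: hl_def der_def)
    from Cons.IH[OF this Cons.prems(2) h] a1 show ?thesis by simp
  next
    assume h: "st q (Kop q c f) (der c g) w \<noteq> 0"
    then obtain w' where "der c g w' \<noteq> 0" using st_zero_right' by blast
    then have b1: "b \<ge> 1" using Cons.prems(2) by (auto simp: hl_def der_def)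
    have "hl (b - 1) (der c g)" using Cons.prems(2) by (auto simp: hl_def der_def)
    moreover have "hl a (Kop q c f)" using Cons.prems(1) by (auto simp: hl_def Kop_def)
    ultimately show ?thesis using Cons.IH[OF _ _ h] b1 by fastforce
  qed
qed

lemma hl_basis: "hl (length u) (basis u)"
  by (simp add: hl_def basis_def)

definition fs :: "'a::zero vec \<Rightarrow> bool" where
  "fs f \<longleftrightarrow> finite {w. f w \<noteq> 0}"

lemma fs_expand: "fs f \<Longrightarrow> f = (\<lambda>w. \<Sum>u\<in>supp f. f u * basis u w)"
proof
  fix w assume "fs f"
  then have fin: "finite (supp f)" by (simp add: fs_def supp_def)
  have "(\<Sum>u\<in>supp f. f u * basis u w) = (\<Sum>u\<in>supp f. if w = u then f u else 0)"
    by (rule sum.cong) (auto simp: basis_def)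
  also have "\<dots> = (if w \<in> supp f then f w else 0)"
    using fin by (simp add: sum.delta)
  also have "\<dots> = f w" by (simp add: supp_def)
  finally show "f w = (\<Sum>u\<in>supp f. f u * basis u w)" by simp
qed

lemma st_expand:
  assumes "fs f" "fs g"
  shows "st q f g w = (\<Sum>u\<in>supp f. \<Sum>v\<in>supp g. f u * g v * wstar q u v w)"
proof -
  have "st q f g w = st q (\<lambda>x. \<Sum>u\<in>supp f. f u * basis u x) g w"
    by (rule arg_cong[where f="\<lambda>h. st q h g w"], rule fs_expand[OF assms(1)])
  also have "\<dots> = (\<Sum>u\<in>supp f. f u * st q (basis u) g w)"
    by (simp add: st_sum_left st_scale_left)
  also have "\<dots> = (\<Sum>u\<in>supp f. f u * st q (basis u) (\<lambda>x. \<Sum>v\<in>supp g. g v * basis v x) w)"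
    using fs_expand[OF assms(2)] by metis
  also have "\<dots> = (\<Sum>u\<in>supp f. \<Sum>v\<in>supp g. f u * g v * wstar q u v w)"
    by (simp add: st_sum_right st_scale_right st_basis sum_distrib_left mult.assoc)
  finally show ?thesis .
qed

lemma qstar_st: "fs f \<Longrightarrow> fs g \<Longrightarrow> qstar q f g = st q f g"
  by (rule ext) (simp add: qstar_def st_expand)

lemma UNIV_letter: "(UNIV :: letter set) = {X, Y}"
  using letter.exhaust by auto

lemma finite_len: "finite {w :: letter list. length w = n}"
proof -
  have "finite {xs. set xs \<subseteq> (UNIV :: letter set) \<and> length xs = n}"
    by (rule finite_lists_length_eq) (simp add: UNIV_letter)
  then show ?thesis by simp
qed

lemma fs_st: assumes "fs f" "fs g" shows "fs (st q f g)"
proof -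
  have "{w. st q f g w \<noteq> 0} \<subseteq> (\<Union>u\<in>supp f. \<Union>v\<in>supp g. {w :: letter list. length w = length u + length v})"
  proof
    fix w assume "w \<in> {w. st q f g w \<noteq> 0}"
    then have "(\<Sum>u\<in>supp f. \<Sum>v\<in>supp g. f u * g v * wstar q u v w) \<noteq> 0"
      by (simp add: st_expand[OF assms])
    then obtain u v where "u \<in> supp f" "v \<in> supp g" "wstar q u v w \<noteq> 0"
      by (metis (no_types, lifting) mult_zero_right sum.neutral)
    then show "w \<in> (\<Union>u\<in>supp f. \<Union>v\<in>supp g. {w :: letter list. length w = length u + length v})"
      using st_hl[OF hl_basis hl_basis, of q u v w] by (auto simp: st_basis)
  qed
  moreover have "finite (\<Union>u\<in>supp f. \<Union>v\<in>supp g. {w :: letter list. length w = length u + length v})"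
    using assms finite_len by (auto simp: fs_def supp_def)
  ultimately show ?thesis by (simp add: fs_def finite_subset)
qed

lemma fs_basis: "fs (basis u)"
  by (simp add: fs_def basis_def)

definition mono2 :: "'a::field \<Rightarrow> (nat \<Rightarrow> 'a vec) \<Rightarrow> nat multiset \<Rightarrow> 'a vec" where
  "mono2 q F p = foldr (st q) (map F (sorted_list_of_multiset p)) (basis [])"

lemma foldr_qstar: "(\<forall>i. fs (F i)) \<Longrightarrow>
   foldr (qstar q) (map F xs) (basis []) = foldr (st q) (map F xs) (basis [])
   \<and> fs (foldr (st q) (map F xs) (basis []))"
  by (induction xs) (auto simp: fs_basis qstar_st fs_st)

lemma monomial_mono2: "(\<forall>i. fs (F i)) \<Longrightarrow> monomial q F p = mono2 q F p"
  by (simp add: monomial_def mono2_def qstar_list_def foldr_qstar)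

lemma der_Kop: "q \<noteq> 0 \<Longrightarrow> der b (Kop q a f) = (\<lambda>w. q powi (2*bar a*bar b) * Kop q a (der b f) w)"
  by (simp add: der_def Kop_def fun_eq_iff distrib_left power_int_add)

lemma Kop_Kop: "Kop q b (Kop q a f) = Kop q a (Kop q b f)"
  by (simp add: Kop_def fun_eq_iff)

lemma st_Kop: "q \<noteq> 0 \<Longrightarrow> st q (Kop q a f) (Kop q a g) w = q powi (2 * bar a * barw w) * st q f g w"
proof (induction w arbitrary: f g)
  case Nil
  then show ?case by (simp add: st_Nil Kop_def)
next
  case (Cons b w)
  have "st q (Kop q a f) (Kop q a g) (b # w)
      = q powi (2*bar a*bar b) * st q (Kop q a (der b f)) (Kop q a g) w
        + q powi (2*bar a*bar b) * st q (Kop q a (Kop q b f)) (Kop q a (der b g)) w"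
    using Cons.prems by (simp add: st_Cons der_Kop Kop_Kop st_scale_left st_scale_right)
  also have "\<dots> = q powi (2*bar a*bar b) * q powi (2 * bar a * barw w) *
        (st q (der b f) g w + st q (Kop q b f) (der b g) w)"
    using Cons by (simp add: algebra_simps)
  also have "\<dots> = q powi (2 * bar a * barw (b # w)) * st q f g (b # w)"
    using Cons.prems by (simp add: st_Cons distrib_left power_int_add)
  finally show ?case .
qed

lemma Kop_st: "q \<noteq> 0 \<Longrightarrow> Kop q a (st q f g) = st q (Kop q a f) (Kop q a g)"
  by (rule ext) (simp add: st_Kop, simp add: Kop_def)

lemma der_st: "der a (st q f g) = (\<lambda>w. st q (der a f) g w + st q (Kop q a f) (der a g) w)"
  by (simp add: der_def st_Cons)

lemma st_assoc: "q \<noteq> 0 \<Longrightarrow> st q (st q f g) h w = st q f (st q g h) w"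
proof (induction w arbitrary: f g h)
  case Nil
  then show ?case by (simp add: st_Nil)
next
  case (Cons a w)
  have "st q (st q f g) h (a # w) = st q (st q (der a f) g) h w + st q (st q (Kop q a f) (der a g)) h w
      + st q (st q (Kop q a f) (Kop q a g)) (der a h) w"
    using Cons.prems by (simp add: st_Cons der_st st_add_left Kop_st)
  also have "\<dots> = st q (der a f) (st q g h) w + st q (Kop q a f) (st q (der a g) h) w
      + st q (Kop q a f) (st q (Kop q a g) (der a h)) w"
    using Cons by simp
  also have "\<dots> = st q f (st q g h) (a # w)"
    by (simp add: st_Cons der_st st_add_right)
  finally show ?case .
qed

lemma st_assoc_fun: "q \<noteq> 0 \<Longrightarrow> st q (st q f g) h = st q f (st q g h)"
  by (rule ext) (rule st_assoc)

definition Gi :: "int \<Rightarrow> 'a::field vec" where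
  "Gi j = (if j < 0 then (\<lambda>_. 0) else Gt (nat j))"
definition Wi :: "int \<Rightarrow> 'a::field vec" where
  "Wi j = (if j < 1 then (\<lambda>_. 0) else basis (Y # concat (replicate (nat (j-1)) [X,Y])))"

lemma barw_rep[simp]: "barw (concat (replicate k [X,Y])) = 0"
  by (induction k) simp_all

lemma rep_Suc: "concat (replicate (Suc k) [X,Y]) = X # Y # concat (replicate k [X,Y])"
  by simp

lemma der_Gi_X[simp]: "der X (Gi j) = Wi j"
proof (cases "j \<ge> 1")
  case True
  define k where "k = nat (j - 1)"
  have k: "nat j = Suc k" "nat (j - 1) = k" using True by (simp_all add: k_def)
  show ?thesis using True k by (simp add: Gi_def Wi_def Gt_def der_basis)
next
  case False
  then show ?thesis
    by (cases "j = 0") (auto simp: Gi_def Wi_def Gt_def der_basis)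
qed

lemma der_Gi_Y[simp]: "der Y (Gi j) = (\<lambda>_. 0)"
proof (cases "j \<ge> 1")
  case True
  define k where "k = nat (j - 1)"
  have k: "nat j = Suc k" using True by (simp add: k_def)
  show ?thesis using True k by (simp add: Gi_def Gt_def der_basis)
next
  case False
  then show ?thesis
    by (cases "j = 0") (auto simp: Gi_def Gt_def der_basis)
qed

lemma der_Wi_X[simp]: "der X (Wi j) = (\<lambda>_. 0)"
  by (auto simp: Wi_def der_basis)

lemma der_Wi_Y[simp]: "der Y (Wi j) = Gi (j - 1)"
  by (auto simp: Wi_def Gi_def Gt_def der_basis)

lemma Kop_Gi[simp]: "Kop q a (Gi j) = Gi j"
  by (auto simp: Kop_def Gi_def Gt_def basis_def fun_eq_iff)

lemma Kop_Wi: "Kop q a (Wi j) = (\<lambda>w. q powi (- 2 * bar a) * Wi j w)"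
  by (auto simp: Kop_def Wi_def basis_def fun_eq_iff)

lemma Gi_Nil: "Gi j [] = (if j = 0 then 1 else 0)"
  by (auto simp: Gi_def Gt_def basis_def)

lemma Wi_Nil[simp]: "Wi j [] = 0"
  by (auto simp: Wi_def basis_def)

context
  fixes q :: "'a::field"
  assumes q0: "q \<noteq> 0"
begin

definition T0 :: "int \<Rightarrow> int \<Rightarrow> 'a vec" where "T0 j k = st q (Gi j) (Gi k)"
definition T1 :: "int \<Rightarrow> int \<Rightarrow> 'a vec" where
  "T1 j k = (\<lambda>w. st q (Wi j) (Gi k) w + st q (Gi j) (Wi k) w)"
definition T1' :: "int \<Rightarrow> int \<Rightarrow> 'a vec" where
  "T1' j k = (\<lambda>w. st q (Gi (j-1)) (Wi k) w + q powi 2 * st q (Wi j) (Gi (k-1)) w)"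
definition T2 :: "int \<Rightarrow> int \<Rightarrow> 'a vec" where "T2 j k = st q (Wi j) (Wi k)"

lemma T0X: "T0 j k (X # w) = T1 j k w"
  by (simp add: T0_def T1_def st_Cons)
lemma T0Y: "T0 j k (Y # w) = 0"
  by (simp add: T0_def st_Cons)
lemma T1X: "T1 j k (X # w) = (q powi (-2) + 1) * T2 j k w"
  by (simp add: T1_def T2_def st_Cons Kop_Wi st_scale_left; simp add: algebra_simps)
lemma T1Y: "T1 j k (Y # w) = T0 (j-1) k w + T0 j (k-1) w"
  by (simp add: T1_def T0_def st_Cons Kop_Wi st_scale_left; simp add: algebra_simps)
lemma T1'X: "T1' j k (X # w) = T2 (j-1) k w + T2 j (k-1) w"
  using q0 by (simp add: T1'_def T2_def st_Cons Kop_Wi st_scale_left; simp add: algebra_simps power_int_minus)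
lemma T1'Y: "T1' j k (Y # w) = (1 + q powi 2) * T0 (j-1) (k-1) w"
  by (simp add: T1'_def T0_def st_Cons Kop_Wi st_scale_left; simp add: algebra_simps)
lemma T2X: "T2 j k (X # w) = 0"
  by (simp add: T2_def st_Cons Kop_Wi st_scale_left)
lemma T2Y: "T2 j k (Y # w) = T1' j k w"
  by (simp add: T1'_def T2_def st_Cons Kop_Wi st_scale_left; simp add: algebra_simps)

lemma T_sym: "\<forall>j k. T0 j k w = T0 k j w \<and> T1 j k w = T1 k j w \<and> T1' j k w = T1' k j w
   \<and> T2 j k w = T2 k j w"
proof (induction w)
  case Nil
  show ?case by (simp add: T0_def T1_def T1'_def T2_def st_Nil Gi_Nil)
next
  case (Cons a w)
  show ?case
  proof (cases a)
    case X
    then show ?thesis using Cons by (simp add: T0X T1X T1'X T2X add.commute)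
  next
    case Y
    then show ?thesis using Cons by (simp add: T0Y T1Y T1'Y T2Y add.commute)
  qed
qed

lemma Gt_comm: "st q (Gt i) (Gt j) = st q (Gt j) (Gt i)"
proof -
  have "T0 (int i) (int j) = T0 (int j) (int i)" using T_sym by blast
  then show ?thesis by (simp add: T0_def Gi_def)
qed

end

fun wY :: "'a::field \<Rightarrow> int \<Rightarrow> letter list \<Rightarrow> 'a" where
  "wY q h [] = 1"
| "wY q h (c # w) = qint q (1 + h + bar c) * wY q (h + bar c) w"

definition Yf :: "'a::field \<Rightarrow> int \<Rightarrow> 'a vec" where
  "Yf q h = (\<lambda>w. if h + barw w = 0 then wY q h w else 0)"

fun wZ :: "'a::field \<Rightarrow> int \<Rightarrow> letter list \<Rightarrow> 'a" where
  "wZ q r [] = 1"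
| "wZ q r (c # w) = q * qint q r * wZ q (r + bar c) w"

definition Zf :: "'a::field \<Rightarrow> int \<Rightarrow> 'a vec" where
  "Zf q r = (\<lambda>w. if r + barw w = 0 then wZ q r w else 0)"

fun ga :: "'a::field \<Rightarrow> letter list \<Rightarrow> 'a" and wa :: "'a::field \<Rightarrow> letter list \<Rightarrow> 'a" where
  "ga al [] = 1"
| "ga al (X # w) = wa al w"
| "ga al (Y # w) = 0"
| "wa al [] = 0"
| "wa al (X # w) = 0"
| "wa al (Y # w) = al * ga al w"

lemma qint0[simp]: "qint q 0 = 0" by (simp add: qint_def)

lemma der_Yf_X: "der X (Yf q h) = (\<lambda>w. qint q (h + 2) * Yf q (h + 1) w)"
  by (auto simp: der_def Yf_def fun_eq_iff algebra_simps)
lemma der_Yf_Y: "der Y (Yf q h) = (\<lambda>w. qint q h * Yf q (h - 1) w)"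
  by (auto simp: der_def Yf_def fun_eq_iff algebra_simps)
lemma Kop_Yf: "Kop q a (Yf q h) = (\<lambda>w. q powi (- 2 * bar a * h) * Yf q h w)"
proof (rule ext)
  fix w show "Kop q a (Yf q h) w = q powi (- 2 * bar a * h) * Yf q h w"
  proof (cases "h + barw w = 0")
    case True
    then have "barw w = - h" by simp
    then show ?thesis by (simp add: Kop_def Yf_def)
  next
    case False
    then show ?thesis by (simp add: Kop_def Yf_def)
  qed
qed

lemma Zf_X: "Zf q r (X # w) = q * qint q r * Zf q (r + 1) w"
  by (auto simp: Zf_def algebra_simps)
lemma Zf_Y: "Zf q r (Y # w) = q * qint q r * Zf q (r - 1) w"
  by (auto simp: Zf_def algebra_simps)
lemma Zf_Nil: "Zf q r [] = (if r = 0 then 1 else 0)"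
  by (simp add: Zf_def)

lemma der_ga_X[simp]: "der X (ga al) = wa al" by (simp add: der_def fun_eq_iff)
lemma der_ga_Y[simp]: "der Y (ga al) = (\<lambda>_. 0)" by (simp add: der_def fun_eq_iff)
lemma der_wa_X[simp]: "der X (wa al) = (\<lambda>_. 0)" by (simp add: der_def fun_eq_iff)
lemma der_wa_Y[simp]: "der Y (wa al) = (\<lambda>w. al * ga al w)" by (simp add: der_def fun_eq_iff)

lemma ga_wa_bar: "(ga al w \<noteq> 0 \<longrightarrow> barw w = 0) \<and> (wa al w \<noteq> 0 \<longrightarrow> barw w = -1)"
proof (induction w)
  case Nil then show ?case by simp
next
  case (Cons c w) then show ?case by (cases c) auto
qed

lemma Kop_ga[simp]: "Kop q a (ga al) = ga al"
proof (rule ext)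
  fix w show "Kop q a (ga al) w = ga al w"
    using ga_wa_bar[of al w] by (cases "ga al w = 0") (auto simp: Kop_def)
qed
lemma Kop_wa: "Kop q a (wa al) = (\<lambda>w. q powi (- 2 * bar a) * wa al w)"
proof (rule ext)
  fix w show "Kop q a (wa al) w = q powi (- 2 * bar a) * wa al w"
    using ga_wa_bar[of al w] by (cases "wa al w = 0") (auto simp: Kop_def)
qed

context
  fixes q :: "'a::field"
  assumes q0: "q \<noteq> 0" and q2: "q * q \<noteq> 1"
begin

lemma qd: "q - inverse q \<noteq> 0"
proof
  assume "q - inverse q = 0"
  then have "q * q = q * inverse q" by simp
  then show False using q0 q2 by simp
qed

lemma pw_add: "q powi (a + b) = q powi a * q powi b" using q0 by (simp add: power_int_add)
lemma pw_neg: "q powi (- a) = inverse (q powi a)" by (simp add: power_int_minus)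
lemma pw_mult2: "q powi (2 * a) = q powi a * q powi a"
  using q0 by (metis mult_2 pw_add)
lemma pw_u: "q powi a \<noteq> 0" using q0 by simp

lemma qint_e: "qint q m = (q powi m - inverse (q powi m)) / (q - inverse q)"
  by (simp add: qint_def pw_neg)

lemma pc: "q powi 1 = q" "q powi 2 = q * q" "q powi 0 = 1"
  by (simp_all add: power2_eq_square)

lemma pw_diff: "q powi (a - b) = q powi a * inverse (q powi b)"
  using q0 by (simp add: power_int_diff field_simps)

definition "cc = inverse (q - inverse q)"

lemma qint_c: "qint q m = (q powi m - inverse (q powi m)) * cc"
  by (simp add: qint_def pw_neg cc_def divide_inverse)

lemma q21: "q * q - 1 \<noteq> 0" "1 - q * q \<noteq> 0" using q2 by auto

lemma qint_d: "qint q m = (q powi m - inverse (q powi m)) * q / (q * q - 1)"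
  using q0 q21 by (simp add: qint_def pw_neg field_simps)

lemma qint2: "qint q 2 = q + inverse q"
proof -
  have "qint q 2 = (q * q - inverse q * inverse q) / (q - inverse q)"
    by (simp add: qint_def pw_neg power2_eq_square)
  also have "\<dots> = q + inverse q" using qd by (simp add: field_simps)
  finally show ?thesis .
qed

lemmas FF = qint_d pw_neg pw_diff pw_add pw_mult2 pc

lemmas EE = qint_c pw_neg pw_diff pw_add pw_mult2 pc

lemma I1: "q powi (-h) * (q * qint q h) = qint q (h+2) * q powi (-(h+1)) + q powi (-(2*h)) * (-(qint q 2) * inverse q)"
  using pw_u[of h] q0 unfolding qint2 EE by (simp add: field_simps)

lemma J1: "qint q (h + 1) = inverse q * qint q h + q powi h"
proof -
  have n: "q powi (h+1) - inverse (q powi (h+1)) = inverse q * (q powi h - inverse (q powi h)) + q powi h * (q - inverse q)"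
    using pw_u[of h] q0 unfolding pw_add pc by (simp add: field_simps)
  have "qint q (h+1) = (inverse q * (q powi h - inverse (q powi h)) + q powi h * (q - inverse q)) / (q - inverse q)"
    unfolding qint_def pw_neg n ..
  also have "\<dots> = inverse q * ((q powi h - inverse (q powi h)) / (q - inverse q)) + q powi h"
    using qd by (simp add: add_divide_distrib)
  finally show ?thesis by (simp add: qint_def pw_neg)
qed

lemma J2: "qint q (h + 1) = q * qint q h + q powi (-h)"
proof -
  have n: "q powi (h+1) - inverse (q powi (h+1)) = q * (q powi h - inverse (q powi h)) + inverse (q powi h) * (q - inverse q)"
    using pw_u[of h] q0 unfolding pw_add pc by (simp add: field_simps)
  have "qint q (h+1) = (q * (q powi h - inverse (q powi h)) + inverse (q powi h) * (q - inverse q)) / (q - inverse q)"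
    unfolding qint_def pw_neg n ..
  also have "\<dots> = q * ((q powi h - inverse (q powi h)) / (q - inverse q)) + inverse (q powi h)"
    using qd by (simp add: add_divide_distrib)
  finally show ?thesis by (simp add: qint_def pw_neg)
qed

lemma J2': "qint q (h + 2) = q * qint q (h + 1) + q powi (-(h+1))"
  using J2[of "h+1"] by (simp add: add.assoc)

lemma I3: "-(qint q 2) * inverse q * (q * qint q (h + 1)) =
   qint q (h+2) * (-(qint q 2) * inverse q) + q powi (-(2*h)) * (inverse (q * q) + 1) * q powi (h - 1)"
  using pw_u[of h] q0 unfolding J2' qint2 pw_neg pw_add pw_diff pw_mult2 pc by (simp add: field_simps)

lemma I4: "-(qint q 2) * inverse q * (q * qint q (h + 1)) =
   qint q h * (-(qint q 2) * inverse q) + q powi (2*h) * (- q - inverse q) * q powi (-h)"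
proof -
  have "q powi (2*h) * q powi (-h) = q powi h" using pw_u[of h] by (simp add: pw_mult2 pw_neg)
  then show ?thesis using q0 unfolding J1 qint2 by (simp add: field_simps)
qed

lemma I6: "q powi (h - 1) * (q * qint q (h + 2)) =
   qint q h * q powi (h - 1 - 1) + q powi (2*h) * (- q) * (-(qint q 2) * inverse q)"
  using pw_u[of h] q0 unfolding qint2 EE by (simp add: field_simps)

end

context
  fixes q :: "'a::field"
  assumes q0: "q \<noteq> 0" and q2: "q * q \<noteq> 1"
begin


definition "Ee = st q (ga (-q)) (ga (- inverse q))"
definition "E1 = (\<lambda>w. st q (wa (-q)) (ga (- inverse q)) w + st q (ga (-q)) (wa (- inverse q)) w)"
definition "E2 = st q (wa (-q)) (wa (- inverse q))"

definition "P h = st q (Yf q h) Ee"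
definition "V h = st q (Yf q h) E1"
definition "SS h = st q (Yf q h) E2"

definition "Ph h = (\<lambda>w. q powi (-h) * Zf q h w)"
definition "Vh h = (\<lambda>w. -(qint q 2) * inverse q * Zf q (h+1) w)"
definition "Sh h = (\<lambda>w. q powi (h-1) * Zf q (h+2) w)"

lemma pm2: "q powi (-2) = inverse (q * q)" "q powi 2 = q * q"
  by (simp_all add: power_int_minus power2_eq_square)

lemma Ee_X: "der X Ee = E1"
  by (simp add: Ee_def E1_def der_st)
lemma Ee_Y: "der Y Ee = (\<lambda>_. 0)"
  by (simp add: Ee_def der_st)
lemma E1_X: "der X E1 = (\<lambda>w. (inverse (q*q) + 1) * E2 w)"
proof (rule ext)
  fix w show "der X E1 w = (inverse (q*q) + 1) * E2 w"
    unfolding der_def E1_def E2_def st_Cons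
    by (simp add: Kop_wa st_scale_left pm2 algebra_simps)
qed
lemma E1_Y: "der Y E1 = (\<lambda>w. (- q - inverse q) * Ee w)"
proof (rule ext)
  fix w show "der Y E1 w = (- q - inverse q) * Ee w"
    unfolding der_def E1_def Ee_def st_Cons
    by (simp add: Kop_wa st_scale_left st_scale_right st_neg_left st_neg_right; simp add: algebra_simps)
qed
lemma E2_X: "der X E2 = (\<lambda>_. 0)"
  by (rule ext) (simp add: E2_def der_st Kop_wa)
lemma E2_Y: "der Y E2 = (\<lambda>w. - q * E1 w)"
proof (rule ext)
  fix w show "der Y E2 w = - q * E1 w"
    unfolding der_def E1_def E2_def st_Cons
    using q0 by (simp add: Kop_wa st_scale_left st_scale_right st_neg_left st_neg_right pm2; simp add: algebra_simps power2_eq_square)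
qed

lemma KX: "Kop q X (Yf q h) = (\<lambda>w. q powi (-(2*h)) * Yf q h w)"
  by (simp add: Kop_Yf)
lemma KY: "Kop q Y (Yf q h) = (\<lambda>w. q powi (2*h) * Yf q h w)"
  by (simp add: Kop_Yf)

lemma P_X: "P h (X # w) = qint q (h+2) * P (h+1) w + q powi (-(2*h)) * V h w"
  by (simp add: P_def V_def st_Cons der_Yf_X KX Ee_X st_scale_left)
lemma P_Y: "P h (Y # w) = qint q h * P (h-1) w"
  by (simp add: P_def st_Cons der_Yf_Y KY Ee_Y st_scale_left)
lemma V_X: "V h (X # w) = qint q (h+2) * V (h+1) w + q powi (-(2*h)) * (inverse (q*q) + 1) * SS h w"
  by (simp add: V_def SS_def st_Cons der_Yf_X KX E1_X st_scale_left st_scale_right mult.assoc)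
lemma V_Y: "V h (Y # w) = qint q h * V (h-1) w + q powi (2*h) * (- q - inverse q) * P h w"
  by (simp add: V_def P_def st_Cons der_Yf_Y KY E1_Y st_scale_left st_scale_right mult.assoc)
lemma S_X: "SS h (X # w) = qint q (h+2) * SS (h+1) w"
  by (simp add: SS_def st_Cons der_Yf_X KX E2_X st_scale_left)
lemma S_Y: "SS h (Y # w) = qint q h * SS (h-1) w + q powi (2*h) * (- q) * V h w"
  by (simp add: V_def SS_def st_Cons der_Yf_Y KY E2_Y st_scale_left st_scale_right st_neg_right mult.assoc)

lemma Ph_X: "Ph h (X # w) = qint q (h+2) * Ph (h+1) w + q powi (-(2*h)) * Vh h w"
proof -
  have "Ph h (X # w) = (q powi (-h) * (q * qint q h)) * Zf q (h+1) w"
    by (simp add: Ph_def Zf_X mult.assoc)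
  also have "\<dots> = (qint q (h+2) * q powi (-(h+1)) + q powi (-(2*h)) * (-(qint q 2) * inverse q)) * Zf q (h+1) w"
    by (simp only: I1[OF q0 q2])
  also have "\<dots> = qint q (h+2) * Ph (h+1) w + q powi (-(2*h)) * Vh h w"
    by (simp add: Ph_def Vh_def algebra_simps)
  finally show ?thesis .
qed

lemma Ph_Y: "Ph h (Y # w) = qint q h * Ph (h-1) w"
proof -
  have "q powi (-h) * q = q powi (-(h-1))" using q0 by (simp add: power_int_add power_int_diff power_int_minus field_simps)
  then show ?thesis by (simp add: Ph_def Zf_Y algebra_simps)
qed

lemma Vh_X: "Vh h (X # w) = qint q (h+2) * Vh (h+1) w + q powi (-(2*h)) * (inverse (q*q) + 1) * Sh h w"
proof -
  have "Vh h (X # w) = (-(qint q 2) * inverse q * (q * qint q (h + 1))) * Zf q (h+2) w"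
    by (simp add: Vh_def Zf_X mult.assoc add.assoc)
  also have "\<dots> = (qint q (h+2) * (-(qint q 2) * inverse q) + q powi (-(2*h)) * (inverse (q * q) + 1) * q powi (h - 1)) * Zf q (h+2) w"
    by (simp only: I3[OF q0 q2])
  also have "\<dots> = qint q (h+2) * Vh (h+1) w + q powi (-(2*h)) * (inverse (q*q) + 1) * Sh h w"
    by (simp add: Vh_def Sh_def algebra_simps)
  finally show ?thesis .
qed

lemma Vh_Y: "Vh h (Y # w) = qint q h * Vh (h-1) w + q powi (2*h) * (- q - inverse q) * Ph h w"
proof -
  have "Vh h (Y # w) = (-(qint q 2) * inverse q * (q * qint q (h + 1))) * Zf q h w"
    by (simp add: Vh_def Zf_Y mult.assoc)
  also have "\<dots> = (qint q h * (-(qint q 2) * inverse q) + q powi (2*h) * (- q - inverse q) * q powi (-h)) * Zf q h w"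
    by (simp only: I4[OF q0 q2])
  also have "\<dots> = qint q h * Vh (h-1) w + q powi (2*h) * (- q - inverse q) * Ph h w"
    by (simp add: Vh_def Ph_def algebra_simps)
  finally show ?thesis .
qed

lemma Sh_X: "Sh h (X # w) = qint q (h+2) * Sh (h+1) w"
proof -
  have e: "q powi (h-1) * q = q powi h" using q0 by (simp add: power_int_diff field_simps)
  have "Sh h (X # w) = (q powi (h-1) * q) * qint q (h+2) * Zf q (h+2+1) w"
    unfolding Sh_def Zf_X by (simp only: mult.assoc)
  also have "\<dots> = qint q (h+2) * (q powi h * Zf q (h+2+1) w)"
    unfolding e by (simp add: mult.commute mult.left_commute)
  also have "q powi h * Zf q (h+2+1) w = Sh (h+1) w" by (simp add: Sh_def add.commute add.left_commute)
  finally show ?thesis .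
qed

lemma Sh_Y: "Sh h (Y # w) = qint q h * Sh (h-1) w + q powi (2*h) * (- q) * Vh h w"
proof -
  have z: "Zf q (h + 2 - 1) = Zf q (h+1)" by (simp add: add.commute)
  have z2: "Zf q (h - 1 + 2) = Zf q (h+1)" by (simp add: add.commute)
  have "Sh h (Y # w) = (q powi (h - 1) * (q * qint q (h + 2))) * Zf q (h+1) w"
    unfolding Sh_def Zf_Y z by (simp only: mult.assoc)
  also have "\<dots> = (qint q h * q powi (h - 1 - 1) + q powi (2*h) * (- q) * (-(qint q 2) * inverse q)) * Zf q (h+1) w"
    by (simp only: I6[OF q0 q2])
  also have "\<dots> = qint q h * (q powi (h - 1 - 1) * Zf q (h+1) w) + q powi (2*h) * (- q) * (-(qint q 2) * inverse q * Zf q (h+1) w)"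
    by (simp only: distrib_right mult.assoc)
  also have "\<dots> = qint q h * Sh (h-1) w + q powi (2*h) * (- q) * Vh h w"
    unfolding Vh_def Sh_def z2 ..
  finally show ?thesis .
qed

lemma Yf_Nil: "Yf q h [] = (if h = 0 then 1 else 0)"
  by (simp add: Yf_def)

lemma PVS: "\<forall>h \<ge> 0. P h w = Ph h w \<and> V h w = Vh h w \<and> SS h w = Sh h w"
proof (induction w)
  case Nil
  show ?case
    by (simp add: P_def V_def SS_def Ph_def Vh_def Sh_def Ee_def E1_def E2_def st_Nil Yf_Nil Zf_Nil)
next
  case (Cons a w)
  have aux: "qint q h * P (h-1) w = qint q h * Ph (h-1) w \<and> qint q h * V (h-1) w = qint q h * Vh (h-1) w
     \<and> qint q h * SS (h-1) w = qint q h * Sh (h-1) w" if "h \<ge> 0" for h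
  proof (cases "h = 0")
    case True then show ?thesis by simp
  next
    case False then have "h - 1 \<ge> 0" using that by simp
    then show ?thesis using Cons.IH by simp
  qed
  show ?case
  proof (intro allI impI)
    fix h :: int assume h: "h \<ge> 0"
    have ih: "P h w = Ph h w" "V h w = Vh h w" "SS h w = Sh h w" using Cons.IH h by auto
    have ih1: "P (h+1) w = Ph (h+1) w" "V (h+1) w = Vh (h+1) w" "SS (h+1) w = Sh (h+1) w"
      using Cons.IH h by auto
    show "P h (a # w) = Ph h (a # w) \<and> V h (a # w) = Vh h (a # w) \<and> SS h (a # w) = Sh h (a # w)"
    proof (cases a)
      case X
      then show ?thesis by (simp add: P_X V_X S_X Ph_X Vh_X Sh_X ih ih1)
    next
      case Y
      then show ?thesis using aux[OF h] by (simp add: P_Y V_Y S_Y Ph_Y Vh_Y Sh_Y ih)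
    qed
  qed
qed

lemma main_gen: "st q (Yf q 0) (st q (ga (-q)) (ga (- inverse q))) = basis []"
proof (rule ext)
  fix w
  have "P 0 w = Ph 0 w" using PVS by auto
  moreover have "Ph 0 w = basis [] w"
    by (cases w) (simp_all add: Ph_def Zf_Nil Zf_X Zf_Y basis_def, simp add: Zf_def)
  ultimately show "st q (Yf q 0) (st q (ga (-q)) (ga (- inverse q))) w = basis [] w"
    by (simp add: P_def Ee_def)
qed

end

lemma st_local: "(\<forall>u. length u \<le> length w \<longrightarrow> f u = f' u) \<Longrightarrow> (\<forall>u. length u \<le> length w \<longrightarrow> g u = g' u)
   \<Longrightarrow> st q f g w = st q f' g' w"
proof (induction w arbitrary: f f' g g')
  case Nil then show ?case by (simp add: st_Nil)
next
  case (Cons a w)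
  have 1: "st q (der a f) g w = st q (der a f') g' w"
    by (rule Cons.IH) (use Cons.prems in \<open>auto simp: der_def\<close>)
  have 2: "st q (Kop q a f) (der a g) w = st q (Kop q a f') (der a g') w"
    by (rule Cons.IH) (use Cons.prems in \<open>auto simp: der_def Kop_def\<close>)
  show ?case by (simp add: st_Cons 1 2)
qed

lemma psum_Cons: "psum (c # w) (Suc i) = bar c + psum w i"
  by (simp add: psum_def)
lemma psum_0[simp]: "psum w 0 = 0"
  by (simp add: psum_def)

lemma wY_prod: "wY q h w = (\<Prod>i=1..length w. qint q (1 + h + psum w i))"
proof (induction w arbitrary: h)
  case Nil then show ?case by simp
next
  case (Cons c w)
  have "(\<Prod>i=1..Suc (length w). qint q (1 + h + psum (c # w) i))
      = qint q (1 + h + psum (c # w) 1) * (\<Prod>i=Suc 1..Suc (length w). qint q (1 + h + psum (c # w) i))"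
    by (rule prod.atLeast_Suc_atMost) simp
  also have "\<dots> = qint q (1 + h + bar c) * (\<Prod>i=1..length w. qint q (1 + (h + bar c) + psum w i))"
    by (simp only: prod.atLeast_Suc_atMost_Suc_shift comp_def psum_Cons One_nat_def psum_0)
       (simp add: algebra_simps)
  finally show ?case by (simp add: Cons.IH del: prod.cl_ivl_Suc)
qed

lemma wY_zero: "h \<ge> 0 \<Longrightarrow> i \<le> length w \<Longrightarrow> h + psum w i < 0 \<Longrightarrow> wY q h w = 0"
proof (induction w arbitrary: h i)
  case Nil then show ?case by (simp add: psum_def)
next
  case (Cons c w)
  show ?case
  proof (cases i)
    case 0 then show ?thesis using Cons.prems by simp
  next
    case (Suc i')
    show ?thesis
    proof (cases "h + bar c = -1")
      case True then have "1 + h + bar c = 0" by simp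
      then show ?thesis by simp
    next
      case False
      then have "h + bar c \<ge> 0" using Cons.prems(1) by (cases c) auto
      moreover have "i' \<le> length w" "h + bar c + psum w i' < 0"
        using Cons.prems Suc by (auto simp: psum_Cons)
      ultimately show ?thesis using Cons.IH by simp
    qed
  qed
qed

lemma psum_len: "psum w (length w) = barw w"
  by (simp add: psum_def barw_def)

lemma even_barw: "even (length w) \<longleftrightarrow> even (barw w)"
proof (induction w)
  case Nil then show ?case by simp
next
  case (Cons c w) then show ?case by (cases c) simp_all
qed

context
  fixes q :: "'a::field"
  assumes q0: "q \<noteq> 0" and q2: "q * q \<noteq> 1"
begin

lemma qint1: "qint q 1 = 1"
  using qd[OF q0 q2] by (simp add: qint_def)

lemma Cn_Yf: "Cn q i w = (if length w = 2 * i then Yf q 0 w else 0)"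
proof (cases "length w = 2 * i")
  case True
  show ?thesis
  proof (cases "catalan w")
    case True
    then have "barw w = 0" by (simp add: catalan_def psum_len)
    then show ?thesis using True \<open>length w = 2 * i\<close>
      by (simp add: Cn_def Yf_def qint1 wY_prod)
  next
    case False
    show ?thesis
    proof (cases "barw w = 0")
      case True
      with False obtain j where "1 \<le> j" "j \<le> length w - 1" "psum w j < 0"
        by (auto simp: catalan_def psum_len not_le)
      then have "wY q 0 w = 0" by (intro wY_zero[of 0 j]) auto
      then show ?thesis using False by (simp add: Cn_def Yf_def)
    next
      case b: False
      then show ?thesis using False by (simp add: Cn_def Yf_def)
    qed
  qed
next
  case False
  then show ?thesis by (simp add: Cn_def)
qed

lemma Yf_sum: "length u \<le> N \<Longrightarrow> Yf q 0 u = (\<Sum>i\<le>N. Cn q i u)"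
proof -
  assume u: "length u \<le> N"
  show ?thesis
  proof (cases "even (length u)")
    case True
    then obtain m where m: "length u = 2 * m" by auto
    have "(\<Sum>i\<le>N. Cn q i u) = (\<Sum>i\<le>N. if i = m then Yf q 0 u else 0)"
      by (rule sum.cong) (auto simp: Cn_Yf m)
    also have "\<dots> = Yf q 0 u" using u m by (simp add: sum.delta)
    finally show ?thesis by simp
  next
    case False
    then have "barw u \<noteq> 0" using even_barw by fastforce
    then have "Yf q 0 u = 0" by (simp add: Yf_def)
    then show ?thesis using False by (auto simp: Cn_Yf intro!: sum.neutral)
  qed
qed

end

lemma Gt_Cons: "Gt j (a # w) = der a (Gi (int j)) w"
  by (simp add: der_def Gi_def)

lemma Wi_Cons: "Wi j (a # w) = der a (Wi j) w"
  by (simp add: der_def)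

lemma Gt_Nil: "Gt j [] = (if j = 0 then 1 else 0)"
  by (simp add: Gt_def basis_def)

lemma ga_sum: "length w \<le> N \<Longrightarrow> ga al w = (\<Sum>j\<le>N. al ^ j * Gt j w) \<and> wa al w = (\<Sum>j\<le>N. al ^ j * Wi (int j) w)"
proof (induction w arbitrary: N)
  case Nil
  have "(\<Sum>j\<le>N. al ^ j * Gt j []) = (\<Sum>j\<le>N. if j = 0 then 1 else 0)"
    by (rule sum.cong) (auto simp: Gt_Nil)
  then show ?case by simp
next
  case (Cons c w)
  then obtain M where M: "N = Suc M" "length w \<le> M" by (cases N) auto
  show ?case
  proof (cases c)
    case X
    then show ?thesis using Cons.IH[of N] Cons.prems by (simp add: Gt_Cons Wi_Cons)
  next
    case Y
    have "(\<Sum>j\<le>N. al ^ j * Wi (int j) (Y # w)) = (\<Sum>j\<le>Suc M. al ^ j * Gi (int j - 1) w)"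
      by (simp add: Wi_Cons M)
    also have "\<dots> = al * (\<Sum>j\<le>M. al ^ j * Gt j w)"
      unfolding sum.atMost_Suc_shift by (simp add: sum_distrib_left Gi_def mult.assoc)
    finally show ?thesis using Cons.IH[OF M(2)] Y by (simp add: Gt_Cons)
  qed
qed

definition Tn :: "nat \<Rightarrow> (nat \<times> nat \<times> nat) set" where
  "Tn n = {(i, j, k). i + j + k = n}"

lemma Tn_sub: "Tn n \<subseteq> {..n} \<times> {..n} \<times> {..n}"
  by (auto simp: Tn_def)

lemma finite_Tn: "finite (Tn n)"
  by (rule finite_subset[OF Tn_sub]) auto

lemma hl_Cn: "hl (2 * i) (Cn q i)"
  by (simp add: hl_def Cn_def)

lemma len_rep: "length (concat (replicate j [X, Y])) = 2 * j"
  by (induction j) simp_all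

lemma hl_Gt: "hl (2 * j) (Gt j)"
  using hl_basis[of "concat (replicate j [X, Y])"] by (simp add: Gt_def len_rep)

lemma term_zero: "length w \<noteq> 2 * (i + j + k) \<Longrightarrow> st q (Cn q i) (st q (Gt j) (Gt k)) w = 0"
proof (rule ccontr)
  assume a: "length w \<noteq> 2 * (i + j + k)" "st q (Cn q i) (st q (Gt j) (Gt k)) w \<noteq> 0"
  have "hl (2*j + 2*k) (st q (Gt j) (Gt k))"
    unfolding hl_def using st_hl[OF hl_Gt hl_Gt] by blast
  from st_hl[OF hl_Cn this a(2)] a(1) show False by simp
qed

context
  fixes q :: "'a::field"
  assumes q0: "q \<noteq> 0" and q2: "q * q \<noteq> 1"
begin

lemma expand3:
  "st q (\<lambda>u. \<Sum>i\<le>N. Cn q i u) (st q (\<lambda>u. \<Sum>j\<le>N. a ^ j * Gt j u) (\<lambda>u. \<Sum>k\<le>N. b ^ k * Gt k u)) w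
   = (\<Sum>i\<le>N. \<Sum>j\<le>N. \<Sum>k\<le>N. a ^ j * b ^ k * st q (Cn q i) (st q (Gt j) (Gt k)) w)"
proof -
  have inner: "st q (\<lambda>u. \<Sum>j\<le>N. a ^ j * Gt j u) (\<lambda>u. \<Sum>k\<le>N. b ^ k * Gt k u)
      = (\<lambda>u. \<Sum>j\<le>N. \<Sum>k\<le>N. a ^ j * b ^ k * st q (Gt j) (Gt k) u)"
    by (rule ext) (simp add: st_sum_left st_sum_right st_scale_left st_scale_right mult.assoc)
  show ?thesis
    unfolding inner by (simp add: st_sum_left st_sum_right st_scale_right)
qed

lemma key: "1 \<le> n \<Longrightarrow> (\<Sum>(i,j,k)\<in>Tn n. (-q)^j * (-inverse q)^k * st q (Cn q i) (st q (Gt j) (Gt k)) w) = 0"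
proof (cases "length w = 2 * n")
  case False
  then show ?thesis
    by (intro sum.neutral) (auto simp: Tn_def term_zero)
next
  case True
  assume n1: "1 \<le> n"
  define N where "N = length w"
  define F where "F = (\<lambda>(i,j,k). (-q)^j * (-inverse q)^k * st q (Cn q i) (st q (Gt j) (Gt k)) w)"
  have "0 = basis [] w" using True n1 by (auto simp: basis_def)
  also have "\<dots> = st q (Yf q 0) (st q (ga (-q)) (ga (- inverse q))) w"
    using main_gen[OF q0 q2] by simp
  also have "\<dots> = st q (\<lambda>u. \<Sum>i\<le>N. Cn q i u)
      (st q (\<lambda>u. \<Sum>j\<le>N. (-q) ^ j * Gt j u) (\<lambda>u. \<Sum>k\<le>N. (-inverse q) ^ k * Gt k u)) w"
  proof (rule st_local)
    show "\<forall>u. length u \<le> length w \<longrightarrow> Yf q 0 u = (\<Sum>i\<le>N. Cn q i u)"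
      using Yf_sum[OF q0 q2] by (simp add: N_def)
    show "\<forall>u. length u \<le> length w \<longrightarrow> st q (ga (- q)) (ga (- inverse q)) u =
        st q (\<lambda>u. \<Sum>j\<le>N. (-q) ^ j * Gt j u) (\<lambda>u. \<Sum>k\<le>N. (-inverse q) ^ k * Gt k u) u"
    proof (intro allI impI)
      fix u :: "letter list" assume u: "length u \<le> length w"
      have g: "ga al u' = (\<Sum>j\<le>N. al ^ j * Gt j u')" if "length u' \<le> length u" for al u'
        using ga_sum[of u' N al] that u by (simp add: N_def)
      show "st q (ga (- q)) (ga (- inverse q)) u =
        st q (\<lambda>u. \<Sum>j\<le>N. (-q) ^ j * Gt j u) (\<lambda>u. \<Sum>k\<le>N. (-inverse q) ^ k * Gt k u) u"
        by (rule st_local) (use g in auto)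
    qed
  qed
  also have "\<dots> = (\<Sum>i\<le>N. \<Sum>j\<le>N. \<Sum>k\<le>N. F (i, j, k))"
    by (simp add: expand3 F_def)
  also have "\<dots> = (\<Sum>x\<in>{..N} \<times> {..N} \<times> {..N}. F x)"
    by (simp add: sum.cartesian_product)
  also have "\<dots> = (\<Sum>x\<in>Tn n. F x)"
  proof (rule sum.mono_neutral_right)
    show "Tn n \<subseteq> {..N} \<times> {..N} \<times> {..N}" using Tn_sub[of n] True by (auto simp: N_def)
    show "\<forall>x\<in>{..N} \<times> {..N} \<times> {..N} - Tn n. F x = 0"
    proof
      fix x assume "x \<in> {..N} \<times> {..N} \<times> {..N} - Tn n"
      then obtain i j k where x: "x = (i, j, k)" "i + j + k \<noteq> n" by (auto simp: Tn_def)
      then have "length w \<noteq> 2 * (i + j + k)" using True by simp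
      then have "st q (Cn q i) (st q (Gt j) (Gt k)) w = 0" by (rule term_zero)
      then show "F x = 0" using x by (simp add: F_def)
    qed
  qed simp
  finally show ?thesis by (simp add: F_def)
qed

end

lemma size_le_sum: "0 \<notin># p \<Longrightarrow> size p \<le> sum_mset (p :: nat multiset)"
proof (induction p)
  case empty then show ?case by simp
next
  case (add x p)
  then have "x \<ge> 1" by (cases x) auto
  with add show ?case by simp
qed

lemma mem_le_sum: "x \<in># p \<Longrightarrow> x \<le> sum_mset (p :: nat multiset)"
proof -
  assume "x \<in># p"
  then have "sum_mset p = sum_mset (add_mset x (p - {#x#}))" by simp
  then have "sum_mset p = x + sum_mset (p - {#x#})" by simp
  then show ?thesis by simp
qed


lemma finite_partitions: "finite (partitions n)"
proof -
  have "partitions n \<subseteq> mset ` {xs. set xs \<subseteq> {0..n} \<and> length xs \<le> n}"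
  proof
    fix p assume p: "p \<in> partitions n"
    then have z: "0 \<notin># p" and s: "sum_mset p = n" by (auto simp: partitions_def)
    have "set_mset p \<subseteq> {0..n}"
    proof
      fix x assume "x \<in># p"
      then have "x \<le> sum_mset p" by (rule mem_le_sum)
      then show "x \<in> {0..n}" using s by simp
    qed
    moreover have "size p \<le> n" using size_le_sum[OF z] s by simp
    moreover have "length (sorted_list_of_multiset p) = size p"
      by (metis mset_sorted_list_of_multiset size_mset)
    ultimately show "p \<in> mset ` {xs. set xs \<subseteq> {0..n} \<and> length xs \<le> n}"
      by (intro image_eqI[of _ _ "sorted_list_of_multiset p"]) auto
  qed
  moreover have "finite {xs. set xs \<subseteq> {0..n} \<and> length xs \<le> n}"
    by (rule finite_lists_length_le) simp
  ultimately show ?thesis by (rule finite_subset[OF _ finite_imageI])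
qed

lemma st_unit_left_fun: "st q (basis []) f = f" by (rule ext) (rule st_unit_left)
lemma st_unit_right_fun: "st q f (basis []) = f" by (rule ext) (rule st_unit_right)

context
  fixes q :: "'a::field" and F :: "nat \<Rightarrow> 'a vec"
  assumes q0: "q \<noteq> 0" and comm: "\<And>i j. st q (F i) (F j) = st q (F j) (F i)"
begin

definition "prodL xs = foldr (st q) (map F xs) (basis [])"

lemma prodL_Nil[simp]: "prodL [] = basis []" by (simp add: prodL_def)
lemma prodL_Cons: "prodL (a # xs) = st q (F a) (prodL xs)" by (simp add: prodL_def)

lemma prodL_append: "st q (prodL xs) (prodL ys) = prodL (xs @ ys)"
  by (induction xs) (simp_all add: st_unit_left_fun prodL_Cons st_assoc_fun[OF q0])

lemma comm_prodL: "st q (F a) (prodL ys) = st q (prodL ys) (F a)"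
proof (induction ys)
  case Nil then show ?case by (simp add: st_unit_left_fun st_unit_right_fun)
next
  case (Cons b ys)
  have "st q (F a) (prodL (b # ys)) = st q (st q (F a) (F b)) (prodL ys)"
    by (simp add: prodL_Cons st_assoc_fun[OF q0])
  also have "\<dots> = st q (st q (F b) (F a)) (prodL ys)"
    by (subst comm) (rule refl)
  also have "\<dots> = st q (F b) (st q (F a) (prodL ys))"
    by (rule st_assoc_fun[OF q0])
  also have "\<dots> = st q (prodL (b # ys)) (F a)"
    by (simp add: Cons prodL_Cons st_assoc_fun[OF q0])
  finally show ?case .
qed

lemma prodL_perm: "mset xs = mset ys \<Longrightarrow> prodL xs = prodL ys"
proof (induction xs arbitrary: ys)
  case Nil then show ?case by simp
next
  case (Cons a xs)
  then have "a \<in># mset ys" by (metis list.set_intros(1) set_mset_mset)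
  then have "a \<in> set ys" by simp
  then obtain ys1 ys2 where ys: "ys = ys1 @ a # ys2" by (meson split_list)
  have m: "mset xs = mset (ys1 @ ys2)" using Cons.prems ys by simp
  have "prodL ys = st q (prodL ys1) (st q (F a) (prodL ys2))"
    by (simp add: ys prodL_append[symmetric] prodL_Cons)
  also have "\<dots> = st q (st q (prodL ys1) (F a)) (prodL ys2)"
    by (rule st_assoc_fun[OF q0, symmetric])
  also have "\<dots> = st q (st q (F a) (prodL ys1)) (prodL ys2)"
    by (simp only: comm_prodL)
  also have "\<dots> = st q (F a) (st q (prodL ys1) (prodL ys2))"
    by (rule st_assoc_fun[OF q0])
  also have "\<dots> = prodL (a # xs)"
    by (simp add: prodL_append prodL_Cons Cons.IH[OF m])
  finally show ?case by simp
qed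

lemma mono2_prodL: "mono2 q F p = prodL (sorted_list_of_multiset p)"
  by (simp add: mono2_def prodL_def)

lemma mono_mult: "st q (mono2 q F p) (mono2 q F p') = mono2 q F (p + p')"
  unfolding mono2_prodL prodL_append by (rule prodL_perm) simp

lemma mono_comm: "st q (mono2 q F p) (mono2 q F p') = st q (mono2 q F p') (mono2 q F p)"
  by (simp add: mono_mult add.commute)

lemma mono_single: "mono2 q F {#n#} = F n"
  by (simp add: mono2_prodL prodL_Cons st_unit_right_fun)

definition PolyC :: "nat \<Rightarrow> 'a vec \<Rightarrow> 'a \<Rightarrow> bool" where
  "PolyC n f k \<longleftrightarrow> (\<exists>c. f = (\<lambda>w. \<Sum>p\<in>partitions n. c p * mono2 q F p w) \<and> c {#n#} = k)"

definition "Poly n f \<longleftrightarrow> (\<exists>k. PolyC n f k)"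

lemma PolyC_single: "1 \<le> n \<Longrightarrow> PolyC n (F n) 1"
proof -
  assume n: "1 \<le> n"
  have mem: "{#n#} \<in> partitions n" using n by (simp add: partitions_def)
  let ?c = "\<lambda>p. if p = {#n#} then 1 else (0::'a)"
  have "(\<lambda>w. \<Sum>p\<in>partitions n. ?c p * mono2 q F p w) = F n"
    using mem finite_partitions[of n] by (simp add: mono_single if_distrib[of "\<lambda>x. x * _"] sum.delta cong: if_cong)
  then show ?thesis unfolding PolyC_def by (intro exI[of _ ?c]) auto
qed

lemma PolyC_zero: "PolyC n (\<lambda>_. 0) 0"
  unfolding PolyC_def by (intro exI[of _ "\<lambda>_. 0"]) simp

lemma PolyC_add: "PolyC n f k1 \<Longrightarrow> PolyC n g k2 \<Longrightarrow> PolyC n (\<lambda>w. f w + g w) (k1 + k2)"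
  unfolding PolyC_def
  by (elim exE conjE, rule_tac x="\<lambda>p. c p + ca p" in exI) (auto simp: distrib_right sum.distrib)

lemma PolyC_scale: "PolyC n f k \<Longrightarrow> PolyC n (\<lambda>w. a * f w) (a * k)"
  unfolding PolyC_def
  by (elim exE conjE, rule_tac x="\<lambda>p. a * c p" in exI) (auto simp: sum_distrib_left mult.assoc)

lemma PolyC_sum: "finite I \<Longrightarrow> (\<And>i. i \<in> I \<Longrightarrow> PolyC n (f i) (k i)) \<Longrightarrow> PolyC n (\<lambda>w. \<Sum>i\<in>I. f i w) (\<Sum>i\<in>I. k i)"
proof (induction I rule: finite_induct)
  case empty then show ?case by (simp add: PolyC_zero)
next
  case (insert x I) then show ?case by (simp add: PolyC_add)
qed

lemma PolyC_fun_cong: "PolyC n f k \<Longrightarrow> f = g \<Longrightarrow> k = k' \<Longrightarrow> PolyC n g k'" by simp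

lemma st_lin2:
  "st q (\<lambda>w. \<Sum>p\<in>A. c p * G p w) (\<lambda>w. \<Sum>p'\<in>B. d p' * H p' w) w
   = (\<Sum>p\<in>A. \<Sum>p'\<in>B. c p * d p' * st q (G p) (H p') w)"
  by (simp add: st_sum_left st_sum_right st_scale_left st_scale_right sum_distrib_left mult.assoc)

lemma PolyC_mult:
  assumes a: "1 \<le> a" and b: "1 \<le> b" and f: "PolyC a f k1" and g: "PolyC b g k2"
  shows "PolyC (a + b) (st q f g) 0"
proof -
  obtain c where c: "f = (\<lambda>w. \<Sum>p\<in>partitions a. c p * mono2 q F p w)" using f by (auto simp: PolyC_def)
  obtain d where d: "g = (\<lambda>w. \<Sum>p\<in>partitions b. d p * mono2 q F p w)" using g by (auto simp: PolyC_def)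
  let ?A = "partitions a" and ?B = "partitions b" and ?R = "partitions (a + b)"
  define e where "e r = (\<Sum>x\<in>{x \<in> ?A \<times> ?B. fst x + snd x = r}. c (fst x) * d (snd x))" for r
  have fin: "finite (?A \<times> ?B)" using finite_partitions by simp
  have img: "(\<lambda>x. fst x + snd x) ` (?A \<times> ?B) \<subseteq> ?R" by (auto simp: partitions_def)
  have "st q f g w = (\<Sum>r\<in>?R. e r * mono2 q F r w)" for w
  proof -
    have "st q f g w = (\<Sum>p\<in>?A. \<Sum>p'\<in>?B. c p * d p' * mono2 q F (p + p') w)"
      unfolding c d st_lin2 by (simp add: mono_mult)
    also have "\<dots> = (\<Sum>x\<in>?A \<times> ?B. c (fst x) * d (snd x) * mono2 q F (fst x + snd x) w)"
      by (simp add: sum.cartesian_product split_beta)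
    also have "\<dots> = (\<Sum>r\<in>?R. \<Sum>x\<in>{x \<in> ?A \<times> ?B. fst x + snd x = r}. c (fst x) * d (snd x) * mono2 q F (fst x + snd x) w)"
      by (rule sum.group[OF fin finite_partitions img, symmetric])
    also have "\<dots> = (\<Sum>r\<in>?R. e r * mono2 q F r w)"
      unfolding e_def sum_distrib_right by (intro sum.cong refl) auto
    finally show ?thesis .
  qed
  moreover have "e {#a + b#} = 0"
  proof -
    have "{x \<in> ?A \<times> ?B. fst x + snd x = {#a + b#}} = {}"
    proof (rule ccontr)
      assume "{x \<in> ?A \<times> ?B. fst x + snd x = {#a + b#}} \<noteq> {}"
      then obtain p p' where pp: "p \<in> ?A" "p' \<in> ?B" "p + p' = {#a + b#}" by auto
      have "p \<noteq> {#}" using pp(1) a by (auto simp: partitions_def)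
      moreover have "p' \<noteq> {#}" using pp(2) b by (auto simp: partitions_def)
      ultimately have "size (p + p') \<ge> 2"
        by (simp add: Suc_leI nonempty_has_size)
      then show False using pp(3) by simp
    qed
    then show ?thesis unfolding e_def by (simp only: sum.empty)
  qed
  ultimately show ?thesis unfolding PolyC_def by (intro exI[of _ e]) auto
qed

lemma Poly_comm:
  assumes f: "PolyC a f k1" and g: "PolyC b g k2"
  shows "st q f g = st q g f"
proof (rule ext)
  fix w
  obtain c where c: "f = (\<lambda>w. \<Sum>p\<in>partitions a. c p * mono2 q F p w)" using f by (auto simp: PolyC_def)
  obtain d where d: "g = (\<lambda>w. \<Sum>p\<in>partitions b. d p * mono2 q F p w)" using g by (auto simp: PolyC_def)
  show "st q f g w = st q g f w"
    unfolding c d st_lin2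
    by (subst sum.swap) (simp add: mono_comm mult.commute mult.left_commute)
qed

end

lemma Gt0: "Gt 0 = basis []" by (simp add: Gt_def)

lemma fs_Gt: "fs (Gt i)" by (simp add: Gt_def fs_basis)

lemma fs_Cn: "fs (Cn q i)"
proof -
  have "{w. Cn q i w \<noteq> 0} \<subseteq> {w. length w = 2 * i}" by (auto simp: Cn_def)
  then show ?thesis unfolding fs_def using finite_len finite_subset by blast
qed

definition Rn :: "nat \<Rightarrow> (nat \<times> nat \<times> nat) set" where
  "Rn n = {(i, j, k). i + j + k = n \<and> i < n \<and> j < n \<and> k < n}"

lemma finite_Rn: "finite (Rn n)"
  by (rule finite_subset[of _ "{..n} \<times> {..n} \<times> {..n}"]) (auto simp: Rn_def)

lemma Tn_split: "1 \<le> n \<Longrightarrow> Tn n = insert (n,0,0) (insert (0,n,0) (insert (0,0,n) (Rn n)))"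
  by (auto simp: Tn_def Rn_def)

context
  fixes q :: "'a::field"
  assumes q0: "q \<noteq> 0" and q2: "q * q \<noteq> 1"
begin

lemma Cn0: "Cn q 0 = basis []"
  by (rule ext) (simp add: Cn_Yf[OF q0 q2] Yf_def basis_def)

lemma key2:
  assumes n: "1 \<le> n"
  shows "Cn q n w + ((-q)^n + (-inverse q)^n) * Gt n w
     + (\<Sum>(i,j,k)\<in>Rn n. (-q)^j * (-inverse q)^k * st q (Cn q i) (st q (Gt j) (Gt k)) w) = 0"
proof -
  define F where "F = (\<lambda>(i,j,k). (-q)^j * (-inverse q)^k * st q (Cn q i) (st q (Gt j) (Gt k)) w)"
  have nm: "(n,0,0) \<notin> insert (0,n,0) (insert (0,0,n) (Rn n))" "(0,n,0) \<notin> insert (0,0,n) (Rn n)"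
    "(0,0,n) \<notin> Rn n" using n by (auto simp: Rn_def)
  have "0 = (\<Sum>x\<in>Tn n. F x)" using key[OF q0 q2 n, of w] by (simp add: F_def)
  also have "\<dots> = F (n,0,0) + (F (0,n,0) + (F (0,0,n) + (\<Sum>x\<in>Rn n. F x)))"
    unfolding Tn_split[OF n] using nm finite_Rn by (simp add: sum.insert)
  also have "F (n,0,0) = Cn q n w"
    by (simp add: F_def Gt0 st_unit_left_fun st_unit_right_fun)
  also have "F (0,n,0) = (-q)^n * Gt n w"
    by (simp add: F_def Gt0 Cn0 st_unit_left_fun st_unit_right_fun)
  also have "F (0,0,n) = (-inverse q)^n * Gt n w"
    by (simp add: F_def Gt0 Cn0 st_unit_left_fun st_unit_right_fun)
  finally show ?thesis by (simp add: F_def algebra_simps)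
qed

context
  fixes Fm :: "nat \<Rightarrow> 'a vec"
  assumes comm: "\<And>i j. st q (Fm i) (Fm j) = st q (Fm j) (Fm i)"
begin

lemma term_poly:
  assumes hC: "\<And>m. 1 \<le> m \<Longrightarrow> m < n \<Longrightarrow> Poly q Fm m (Cn q m)"
    and hG: "\<And>m. 1 \<le> m \<Longrightarrow> m < n \<Longrightarrow> Poly q Fm m (Gt m)"
    and x: "(i, j, k) \<in> Rn n"
  shows "PolyC q Fm n (st q (Cn q i) (st q (Gt j) (Gt k))) 0"
proof -
  have s: "i + j + k = n" "i < n" "j < n" "k < n" using x by (auto simp: Rn_def)
  note mult = PolyC_mult[OF q0 comm]
  show ?thesis
  proof (cases "i = 0")
    case True
    then have j1: "1 \<le> j" and k1: "1 \<le> k" using s by auto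
    obtain k1' k2' where "PolyC q Fm j (Gt j) k1'" "PolyC q Fm k (Gt k) k2'"
      using hG[OF j1 s(3)] hG[OF k1 s(4)] unfolding Poly_def[OF q0 comm] by blast
    from mult[OF j1 k1 this] show ?thesis using True s by (simp add: Cn0 st_unit_left_fun)
  next
    case False
    then have i1: "1 \<le> i" by simp
    obtain kc where C: "PolyC q Fm i (Cn q i) kc" using hC[OF i1 s(2)] unfolding Poly_def[OF q0 comm] by blast
    show ?thesis
    proof (cases "j = 0")
      case True
      then have k1: "1 \<le> k" using s by auto
      obtain k2' where "PolyC q Fm k (Gt k) k2'" using hG[OF k1 s(4)] unfolding Poly_def[OF q0 comm] by blast
      from mult[OF i1 k1 C this] show ?thesis using True s by (simp add: Gt0 st_unit_left_fun)
    next
      case j0: False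
      then have j1: "1 \<le> j" by simp
      obtain k1' where Gj: "PolyC q Fm j (Gt j) k1'" using hG[OF j1 s(3)] unfolding Poly_def[OF q0 comm] by blast
      show ?thesis
      proof (cases "k = 0")
        case True
        from mult[OF i1 j1 C Gj] show ?thesis using True s by (simp add: Gt0 st_unit_right_fun)
      next
        case False
        then have k1: "1 \<le> k" by simp
        obtain k2' where "PolyC q Fm k (Gt k) k2'" using hG[OF k1 s(4)] unfolding Poly_def[OF q0 comm] by blast
        from mult[OF j1 k1 Gj this] have "PolyC q Fm (j + k) (st q (Gt j) (Gt k)) 0" .
        from mult[OF i1 _ C this] show ?thesis using j1 s by (simp add: add.assoc)
      qed
    qed
  qed
qed

lemma rest_poly:
  assumes hC: "\<And>m. 1 \<le> m \<Longrightarrow> m < n \<Longrightarrow> Poly q Fm m (Cn q m)"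
    and hG: "\<And>m. 1 \<le> m \<Longrightarrow> m < n \<Longrightarrow> Poly q Fm m (Gt m)"
  shows "PolyC q Fm n (\<lambda>w. \<Sum>(i,j,k)\<in>Rn n. (-q)^j * (-inverse q)^k * st q (Cn q i) (st q (Gt j) (Gt k)) w) 0"
proof -
  have "PolyC q Fm n (\<lambda>w. \<Sum>x\<in>Rn n. (\<lambda>x w. case x of (i,j,k) \<Rightarrow> (-q)^j * (-inverse q)^k * st q (Cn q i) (st q (Gt j) (Gt k)) w) x w)
     (\<Sum>x\<in>Rn n. 0)"
  proof (rule PolyC_sum[OF q0 comm finite_Rn])
    fix x assume x: "x \<in> Rn n"
    obtain i j k where xe: "x = (i, j, k)" by (cases x) auto
    have "PolyC q Fm n (\<lambda>w. ((-q)^j * (-inverse q)^k) * st q (Cn q i) (st q (Gt j) (Gt k)) w) (((-q)^j * (-inverse q)^k) * 0)"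
      by (rule PolyC_scale[OF q0 comm], rule term_poly[OF hC hG]) (use x xe in auto)
    then show "PolyC q Fm n ((\<lambda>x w. case x of (i,j,k) \<Rightarrow> (-q)^j * (-inverse q)^k * st q (Cn q i) (st q (Gt j) (Gt k)) w) x) 0"
      using xe by simp
  qed
  then show ?thesis by (simp add: split_beta)
qed

end

lemma commG: "st q (Gt i) (Gt j) = st q (Gt j) (Gt i)"
  by (rule Gt_comm[OF q0])

lemma partI: "1 \<le> n \<Longrightarrow> PolyC q Gt n (Cn q n) (- ((-q)^n + (-inverse q)^n))"
proof (induction n rule: less_induct)
  case (less n)
  have hC: "Poly q Gt m (Cn q m)" if "1 \<le> m" "m < n" for m
    using less.IH[OF that(2) that(1)] unfolding Poly_def[of q Gt, OF q0 commG] by blast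
  have hG: "Poly q Gt m (Gt m)" if "1 \<le> m" "m < n" for m
    using PolyC_single[of q Gt, OF q0 commG that(1)] unfolding Poly_def[of q Gt, OF q0 commG] by blast
  have R: "PolyC q Gt n (\<lambda>w. \<Sum>(i,j,k)\<in>Rn n. (-q)^j * (-inverse q)^k * st q (Cn q i) (st q (Gt j) (Gt k)) w) 0"
    by (rule rest_poly[of Gt, OF commG hC hG])
  have A: "PolyC q Gt n (\<lambda>w. (- ((-q)^n + (-inverse q)^n)) * Gt n w) (- ((-q)^n + (-inverse q)^n) * 1)"
    by (rule PolyC_scale[of q Gt, OF q0 commG], rule PolyC_single[of q Gt, OF q0 commG less.prems])
  have B: "PolyC q Gt n (\<lambda>w. (-1) * (\<Sum>(i,j,k)\<in>Rn n. (-q)^j * (-inverse q)^k * st q (Cn q i) (st q (Gt j) (Gt k)) w)) ((-1) * 0)"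
    by (rule PolyC_scale[of q Gt, OF q0 commG R])
  have e: "Cn q n = (\<lambda>w. (- ((-q)^n + (-inverse q)^n)) * Gt n w + (-1) * (\<Sum>(i,j,k)\<in>Rn n. (-q)^j * (-inverse q)^k * st q (Cn q i) (st q (Gt j) (Gt k)) w))"
  proof (rule ext)
    fix w show "Cn q n w = (- ((-q)^n + (-inverse q)^n)) * Gt n w + (-1) * (\<Sum>(i,j,k)\<in>Rn n. (-q)^j * (-inverse q)^k * st q (Cn q i) (st q (Gt j) (Gt k)) w)"
      using key2[OF less.prems, of w] by (simp add: algebra_simps eq_neg_iff_add_eq_0)
  qed
  show ?case
    using PolyC_add[of q Gt, OF q0 commG A B] unfolding e[symmetric] by simp
qed

lemma commC: "st q (Cn q i) (Cn q j) = st q (Cn q j) (Cn q i)"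
proof (cases "i = 0 \<or> j = 0")
  case True then show ?thesis by (auto simp: Cn0 st_unit_left_fun st_unit_right_fun)
next
  case False
  then have "1 \<le> i" "1 \<le> j" by auto
  then show ?thesis by (rule Poly_comm[of q Gt, OF q0 commG partI partI])
qed

lemma partII:
  assumes S: "\<And>m. 1 \<le> m \<Longrightarrow> (-q)^m + (-inverse q)^m \<noteq> 0"
  shows "1 \<le> n \<Longrightarrow> PolyC q (Cn q) n (Gt n) (- inverse ((-q)^n + (-inverse q)^n))"
proof (induction n rule: less_induct)
  case (less n)
  define s where "s = (-q)^n + (-inverse q)^n"
  have s0: "s \<noteq> 0" using S[OF less.prems] by (simp add: s_def)
  have hG: "Poly q (Cn q) m (Gt m)" if "1 \<le> m" "m < n" for m
    using less.IH[OF that(2) that(1)] unfolding Poly_def[of q "Cn q", OF q0 commC] by blast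
  have hC: "Poly q (Cn q) m (Cn q m)" if "1 \<le> m" "m < n" for m
    using PolyC_single[of q "Cn q", OF q0 commC that(1)] unfolding Poly_def[of q "Cn q", OF q0 commC] by blast
  have R: "PolyC q (Cn q) n (\<lambda>w. \<Sum>(i,j,k)\<in>Rn n. (-q)^j * (-inverse q)^k * st q (Cn q i) (st q (Gt j) (Gt k)) w) 0"
    by (rule rest_poly[of "Cn q", OF commC hC hG])
  have A: "PolyC q (Cn q) n (\<lambda>w. (- inverse s) * Cn q n w) (- inverse s * 1)"
    by (rule PolyC_scale[of q "Cn q", OF q0 commC], rule PolyC_single[of q "Cn q", OF q0 commC less.prems])
  have B: "PolyC q (Cn q) n (\<lambda>w. (- inverse s) * (\<Sum>(i,j,k)\<in>Rn n. (-q)^j * (-inverse q)^k * st q (Cn q i) (st q (Gt j) (Gt k)) w)) ((- inverse s) * 0)"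
    by (rule PolyC_scale[of q "Cn q", OF q0 commC R])
  have e: "Gt n = (\<lambda>w. (- inverse s) * Cn q n w + (- inverse s) * (\<Sum>(i,j,k)\<in>Rn n. (-q)^j * (-inverse q)^k * st q (Cn q i) (st q (Gt j) (Gt k)) w))"
  proof (rule ext)
    fix w
    have "s * Gt n w = - (Cn q n w + (\<Sum>(i,j,k)\<in>Rn n. (-q)^j * (-inverse q)^k * st q (Cn q i) (st q (Gt j) (Gt k)) w))"
      using key2[OF less.prems, of w] unfolding s_def by (simp add: algebra_simps eq_neg_iff_add_eq_0)
    then show "Gt n w = (- inverse s) * Cn q n w + (- inverse s) * (\<Sum>(i,j,k)\<in>Rn n. (-q)^j * (-inverse q)^k * st q (Cn q i) (st q (Gt j) (Gt k)) w)"
      using s0 by (simp add: field_simps)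
  qed
  have "PolyC q (Cn q) n (Gt n) (- inverse s * 1 + (- inverse s) * 0)"
    using PolyC_add[of q "Cn q", OF q0 commC A B] by (simp only: e[symmetric])
  then show ?case by (simp add: s_def)
qed

end

lemma A1: fixes q :: "'a::field" assumes q0: "q \<noteq> 0" shows "q ^ m * inverse q ^ m = 1"
    proof -
      have "q ^ m * inverse q ^ m = (q * inverse q) ^ m" by (rule power_mult_distrib[symmetric])
      also have "\<dots> = 1" using q0 by simp
      finally show ?thesis .
    qed
lemma A2: fixes q :: "'a::field" assumes one: "q ^ m * inverse q ^ m = 1" and h: "q ^ m + inverse q ^ m = 0" shows "q ^ m * q ^ m = -1"
    proof -
      have "q ^ m * (q ^ m + inverse q ^ m) = 0" by (simp only: h mult_zero_right)
      then have "q ^ m * q ^ m + 1 = 0" by (simp add: distrib_left one)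
      then show ?thesis by (simp add: eq_neg_iff_add_eq_0)
    qed
lemma A3: fixes q :: "'a::field" assumes mm: "q ^ m * q ^ m = -1" shows "q ^ (4 * m) = 1"
proof -
    have "(q ^ m * q ^ m) * (q ^ m * q ^ m) = (-1) * (-1)" by (simp only: mm)
    then have "(q ^ m * q ^ m) * (q ^ m * q ^ m) = 1" by simp
    moreover have "q ^ (4 * m) = (q ^ m * q ^ m) * (q ^ m * q ^ m)"
    proof -
      have "q ^ (4 * m) = (q ^ m) ^ 4" by (simp only: power_mult mult.commute)
      also have "\<dots> = (q ^ m * q ^ m) * (q ^ m * q ^ m)" by (simp only: power4_eq_xxxx mult.assoc)
      finally show ?thesis .
    qed
    ultimately show "q ^ (4 * m) = 1" by (simp only:)
qed

theorem corollary11p11: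
  fixes q :: "'a::field" and n :: nat
  assumes "q \<noteq> 0" and "\<forall>m::nat. m \<ge> 1 \<longrightarrow> q ^ m \<noteq> 1"
    and "n \<ge> 1"
  shows "(\<exists>c. hom_poly_with q Gt n c (Cn q n)
            \<and> c {#n#} = (-1) ^ (n + 1) * (q ^ n + inverse q ^ n))
       \<and> (\<exists>d. hom_poly_with q (Cn q) n d (Gt n)
            \<and> d {#n#} = (-1) ^ (n + 1) * inverse (q ^ n + inverse q ^ n))"
proof -
  have q0: "q \<noteq> 0" by fact
  have q2: "q * q \<noteq> 1" using assms(2)[rule_format, of 2] by (simp add: power2_eq_square)
  have Sq: "q ^ m + inverse q ^ m \<noteq> 0" if m: "1 \<le> m" for m
  proof
    assume h: "q ^ m + inverse q ^ m = 0"
    have "q ^ (4 * m) = 1" by (rule A3[OF A2[OF A1[OF q0] h]])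
    moreover have "4 * m \<ge> 1" using m by simp
    ultimately show False using assms(2)[rule_format, of "4 * m"] by (simp only:)
  qed
  have neg: "(-q)^m + (-inverse q)^m = (-1)^m * (q ^ m + inverse q ^ m)" for m
    by (simp only: power_minus[of q] power_minus[of "inverse q"] distrib_left)
  have S: "(-q)^m + (-inverse q)^m \<noteq> 0" if "1 \<le> m" for m
    using Sq[OF that] by (simp add: neg)
  have P1: "PolyC q Gt n (Cn q n) (- ((-q)^n + (-inverse q)^n))"
    by (rule partI[OF q0 q2 assms(3)])
  have P2: "PolyC q (Cn q) n (Gt n) (- inverse ((-q)^n + (-inverse q)^n))"
    by (rule partII[OF q0 q2 S assms(3)])
  have c1: "- ((-q)^n + (-inverse q)^n) = (-1) ^ (n + 1) * (q ^ n + inverse q ^ n)"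
    by (simp only: neg) simp
  have c2: "- inverse ((-q)^n + (-inverse q)^n) = (-1) ^ (n + 1) * inverse (q ^ n + inverse q ^ n)"
  proof -
    have i1: "inverse ((-1::'a)^n) = (-1)^n" by (subst power_inverse[symmetric]) simp
    show ?thesis by (simp only: neg inverse_mult_distrib i1) simp
  qed
  have mG: "monomial q Gt p = mono2 q Gt p" for p
    by (rule monomial_mono2) (simp add: fs_Gt)
  have mC: "monomial q (Cn q) p = mono2 q (Cn q) p" for p
    by (rule monomial_mono2) (simp add: fs_Cn)
  show ?thesis
  proof
    from P1 obtain c where h1: "Cn q n = (\<lambda>w. \<Sum>p\<in>partitions n. c p * mono2 q Gt p w)" and h2: "c {#n#} = - ((-q)^n + (-inverse q)^n)"
      unfolding PolyC_def[of q Gt, OF q0 commG[OF q0 q2]] by blast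
    from h2 have "c {#n#} = (-1) ^ (n + 1) * (q ^ n + inverse q ^ n)" by (simp only: c1)
    with h1 show "\<exists>c. hom_poly_with q Gt n c (Cn q n) \<and> c {#n#} = (-1) ^ (n + 1) * (q ^ n + inverse q ^ n)"
      by (intro exI[of _ c]) (simp add: hom_poly_with_def mG)
  next
    from P2 obtain d where h1: "Gt n = (\<lambda>w. \<Sum>p\<in>partitions n. d p * mono2 q (Cn q) p w)" and h2: "d {#n#} = - inverse ((-q)^n + (-inverse q)^n)"
      unfolding PolyC_def[of q "Cn q", OF q0 commC[OF q0 q2]] by blast
    from h2 have "d {#n#} = (-1) ^ (n + 1) * inverse (q ^ n + inverse q ^ n)" by (simp only: c2)
    with h1 show "\<exists>d. hom_poly_with q (Cn q) n d (Gt n) \<and> d {#n#} = (-1) ^ (n + 1) * inverse (q ^ n + inverse q ^ n)"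
      by (intro exI[of _ d]) (simp add: hom_poly_with_def mC)
  qed
qed

end
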